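(* Let $h:[0,1]\to\mathbb{R}$ be continuous with a single turning point at $\delta\in(0,1)$, strictly decreasing on $[0,\delta]$ and strictly increasing on $[\delta,1]$, and with $\lim_{u\to0}h(u)=\lim_{u\to1}h(u)$. Write $h_\ell$ for the restriction of $h$ to $[0,\delta]$ and $h_r$ for its restriction to $[\delta,1]$. Let $F_h$ be the distribution function of $h(U_0)$, $U_0\sim\mathcal{U}(0,1)$. Then $T_h=F_h\circ h$ is a v-transform with fulcrum $\delta$ and generator $\Psi(x)=(1-\delta)^{-1}\big(1-h_r^{-1}\circ h_\ell(\delta x)\big)$. If $h$ is symmetric about $\delta=0.5$, then $\Psi(x)=x$ and $T_h=T_\vee$, where $T_\vee(u)=|2u-1|$.
   Context: A v-transform with fulcrum $\delta\in(0,1)$ and generator $\Psi$ (a continuous, strictly increasing distribution function on $[0,1]$) is the function $T(u)=(1-u)-(1-\delta)\Psi(u/\delta)$ for $u\le\delta$ and $T(u)=u-\delta\Psi^{-1}\big(\tfrac{1-u}{1-\delta}\big)$ for $u>\delta$. *)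

theory Defs
  imports "HOL-Analysis.Analysis"
begin

definition vgenerator :: "(real \<Rightarrow> real) \<Rightarrow> bool" where
  "vgenerator \<Psi> \<longleftrightarrow> continuous_on {0..1} \<Psi> \<and> strict_mono_on {0..1} \<Psi> \<and> \<Psi> 0 = 0 \<and> \<Psi> 1 = 1"

definition vtransform :: "real \<Rightarrow> (real \<Rightarrow> real) \<Rightarrow> real \<Rightarrow> real" where
  "vtransform d \<Psi> u =
     (if u \<le> d then (1 - u) - (1 - d) * \<Psi> (u / d)
      else u - d * the_inv_into {0..1} \<Psi> ((1 - u) / (1 - d)))"

definition is_vtransform :: "real \<Rightarrow> (real \<Rightarrow> real) \<Rightarrow> (real \<Rightarrow> real) \<Rightarrow> bool" where
  "is_vtransform d \<Psi> T \<longleftrightarrow> 0 < d \<and> d < 1 \<and> vgenerator \<Psi> \<and>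
     (\<forall>u\<in>{0..1}. T u = vtransform d \<Psi> u)"

text \<open>Distribution function of h(U0), U0 uniform on (0,1).\<close>
definition distfun :: "(real \<Rightarrow> real) \<Rightarrow> real \<Rightarrow> real" where
  "distfun h x = measure lborel {u \<in> {0..1}. h u \<le> x}"

end

theory Submission
  imports Defs
begin

theorem proposition6:
  fixes h :: "real \<Rightarrow> real" and \<delta> :: real
  assumes "0 < \<delta>" and "\<delta> < 1"
    and "continuous_on {0..1} h"
    and "\<forall>x\<in>{0..\<delta>}. \<forall>y\<in>{0..\<delta>}. x < y \<longrightarrow> h y < h x"
    and "strict_mono_on {\<delta>..1} h"
    and "(h \<longlongrightarrow> L) (at_right 0)" and "(h \<longlongrightarrow> L) (at_left 1)"
  shows "is_vtransform \<delta>
           (\<lambda>x. (1 - the_inv_into {\<delta>..1} h (h (\<delta> * x))) / (1 - \<delta>))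
           (distfun h \<circ> h)
         \<and> ((\<delta> = 1/2 \<and> (\<forall>x\<in>{0..1/2}. h (1/2 - x) = h (1/2 + x))) \<longrightarrow>
              (\<forall>x\<in>{0..1}. (1 - the_inv_into {\<delta>..1} h (h (\<delta> * x))) / (1 - \<delta>) = x)
            \<and> (\<forall>u\<in>{0..1}. (distfun h \<circ> h) u = \<bar>2 * u - 1\<bar>))"
proof -
  note d0 = assms(1) and d1 = assms(2) and hc = assms(3)
  define g where "g = the_inv_into {\<delta>..1} h"
  define k where "k = the_inv_into {0..\<delta>} h"
  define \<Psi> where "\<Psi> = (\<lambda>x. (1 - g (h (\<delta> * x))) / (1 - \<delta>))"
  have dec: "h y < h x" if "0 \<le> x" "x < y" "y \<le> \<delta>" for x y
    using assms(4) that by auto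
  have inc: "h x < h y" if "\<delta> \<le> x" "x < y" "y \<le> 1" for x y
    using strict_mono_onD[OF assms(5)] that by auto
  have decle: "h y \<le> h x \<longleftrightarrow> x \<le> y" if "0 \<le> x" "x \<le> \<delta>" "0 \<le> y" "y \<le> \<delta>" for x y
    using dec[of x y] dec[of y x] that by (cases x y rule: linorder_cases) auto
  have incle: "h x \<le> h y \<longleftrightarrow> x \<le> y" if "\<delta> \<le> x" "x \<le> 1" "\<delta> \<le> y" "y \<le> 1" for x y
    using inc[of x y] inc[of y x] that by (cases x y rule: linorder_cases) auto
  have l0: "(h \<longlongrightarrow> h 0) (at_right 0)"
  proof -
    have "(h \<longlongrightarrow> h 0) (at 0 within {0..1})"
      using hc by (simp add: continuous_on_def)
    thus ?thesis by (simp add: at_within_Icc_at_right)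
  qed
  have l1: "(h \<longlongrightarrow> h 1) (at_left 1)"
  proof -
    have "(h \<longlongrightarrow> h 1) (at 1 within {0..1})"
      using hc by (simp add: continuous_on_def)
    thus ?thesis by (simp add: at_within_Icc_at_left)
  qed
  have "L = h 0" using tendsto_unique[OF trivial_limit_at_right_real assms(6) l0] .
  moreover have "L = h 1" using tendsto_unique[OF trivial_limit_at_left_real assms(7) l1] .
  ultimately have h01: "h 1 = h 0" by simp
  have injr: "inj_on h {\<delta>..1}" using strict_mono_on_imp_inj_on[OF assms(5)] .
  have injl: "inj_on h {0..\<delta>}"
  proof (rule inj_onI)
    fix x y assume "x \<in> {0..\<delta>}" "y \<in> {0..\<delta>}" "h x = h y"
    thus "x = y" using decle[of x y] decle[of y x] by auto
  qed
  have hcr: "continuous_on {\<delta>..1} h" using hc d0 by (auto intro: continuous_on_subset)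
  have hcl: "continuous_on {0..\<delta>} h" using hc d1 by (auto intro: continuous_on_subset)
  have imr: "h ` {\<delta>..1} = {h \<delta>..h 1}"
  proof
    show "h ` {\<delta>..1} \<subseteq> {h \<delta>..h 1}" using incle d1 by auto
    show "{h \<delta>..h 1} \<subseteq> h ` {\<delta>..1}"
    proof
      fix y assume "y \<in> {h \<delta>..h 1}"
      then obtain x where "\<delta> \<le> x" "x \<le> 1" "h x = y"
        using IVT'[of h \<delta> y 1] hcr d1 by auto
      thus "y \<in> h ` {\<delta>..1}" by auto
    qed
  qed
  have g: "g y \<in> {\<delta>..1} \<and> h (g y) = y" if yy: "y \<in> {h \<delta>..h 1}" for y
  proof -
    have "y \<in> h ` {\<delta>..1}" using yy imr by simp
    then obtain x where x: "x \<in> {\<delta>..1}" "h x = y" by auto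
    have "g y = x" unfolding g_def using the_inv_into_f_f[OF injr x(1)] x(2) by simp
    thus ?thesis using x by simp
  qed
  have gh: "g (h x) = x" if "x \<in> {\<delta>..1}" for x
    unfolding g_def using the_inv_into_f_f[OF injr that] .
  have k: "k y \<in> {0..\<delta>} \<and> h (k y) = y" if yy: "y \<in> {h \<delta>..h 0}" for y
  proof -
    have "\<exists>x. 0 \<le> x \<and> x \<le> \<delta> \<and> h x = y"
      using IVT2'[of h \<delta> y 0] hcl d0 yy by auto
    then obtain x where "0 \<le> x" "x \<le> \<delta>" "h x = y" by blast
    hence x: "x \<in> {0..\<delta>}" "h x = y" by auto
    have "k y = x" unfolding k_def using the_inv_into_f_f[OF injl x(1)] x(2) by simp
    thus ?thesis using x by simp
  qed
  have hl_range: "h x \<in> {h \<delta>..h 1}" if "x \<in> {0..\<delta>}" for x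
    using decle[of x \<delta>] decle[of 0 x] that h01 d0 by auto
  have hr_range: "h x \<in> {h \<delta>..h 0}" if "x \<in> {\<delta>..1}" for x
    using incle[of \<delta> x] incle[of x 1] that h01 d1 by auto
  have gmono: "g a < g b" if "a \<in> {h \<delta>..h 1}" "b \<in> {h \<delta>..h 1}" "a < b" for a b
    using g[OF that(1)] g[OF that(2)] that(3) incle[of "g b" "g a"] by force
  have gcont: "continuous_on {h \<delta>..h 1} g"
    using continuous_on_inv_into[OF hcr compact_Icc injr] imr g_def by simp
  have \<Psi>0: "\<Psi> 0 = 0" using gh[of 1] d1 h01 by (simp add: \<Psi>_def)
  have \<Psi>1: "\<Psi> 1 = 1" using gh[of \<delta>] d1 d0 by (simp add: \<Psi>_def)
  have dx: "\<delta> * x \<in> {0..\<delta>}" if "x \<in> {0..1}" for x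
    using that d0 by (auto simp: mult_left_le)
  have \<Psi>mono: "strict_mono_on {0..1} \<Psi>"
  proof (rule strict_mono_onI)
    fix x y :: real assume xy: "x \<in> {0..1}" "y \<in> {0..1}" "x < y"
    have "h (\<delta> * y) < h (\<delta> * x)" using dec[of "\<delta>*x" "\<delta>*y"] dx[OF xy(1)] dx[OF xy(2)] xy(3) d0 by auto
    hence "g (h (\<delta> * y)) < g (h (\<delta> * x))"
      using gmono hl_range dx xy by blast
    thus "\<Psi> x < \<Psi> y" using d1 by (simp add: \<Psi>_def divide_strict_right_mono)
  qed
  have \<Psi>cont: "continuous_on {0..1} \<Psi>"
  proof -
    have c1: "continuous_on {0..1} (\<lambda>x. h (\<delta> * x))"
      by (rule continuous_on_compose2[OF hc]) (use dx d1 in \<open>auto intro!: continuous_intros\<close>, smt (verit) atLeastAtMost_iff dx)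
    have c2: "continuous_on {0..1} (\<lambda>x. g (h (\<delta> * x)))"
      by (rule continuous_on_compose2[OF gcont c1]) (use hl_range dx in blast)
    show ?thesis unfolding \<Psi>_def by (intro continuous_intros c2) (use d1 in simp)
  qed
  have gen: "vgenerator \<Psi>" unfolding vgenerator_def using \<Psi>0 \<Psi>1 \<Psi>mono \<Psi>cont by simp
  have Dl: "distfun h (h u) = g (h u) - u" if "u \<in> {0..\<delta>}" for u
  proof -
    have gu: "g (h u) \<in> {\<delta>..1}" "h (g (h u)) = h u" using g[OF hl_range[OF that]] by auto
    have "{v \<in> {0..1}. h v \<le> h u} = {u..g (h u)}"
    proof (intro set_eqI iffI)
      fix v assume v: "v \<in> {v \<in> {0..1}. h v \<le> h u}"
      show "v \<in> {u..g (h u)}"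
      proof (cases "v \<le> \<delta>")
        case True thus ?thesis using v that decle[of u v] gu by auto
      next
        case False thus ?thesis using v that incle[of v "g (h u)"] gu by auto
      qed
    next
      fix v assume v: "v \<in> {u..g (h u)}"
      show "v \<in> {v \<in> {0..1}. h v \<le> h u}"
      proof (cases "v \<le> \<delta>")
        case True thus ?thesis using v that decle[of u v] gu by auto
      next
        case False thus ?thesis using v that incle[of v "g (h u)"] gu by auto
      qed
    qed
    thus ?thesis unfolding distfun_def using gu that by simp
  qed
  have Dr: "distfun h (h u) = u - k (h u)" if "u \<in> {\<delta>..1}" for u
  proof -
    have ku: "k (h u) \<in> {0..\<delta>}" "h (k (h u)) = h u" using k[OF hr_range[OF that]] by auto
    have "{v \<in> {0..1}. h v \<le> h u} = {k (h u)..u}"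
    proof (intro set_eqI iffI)
      fix v assume v: "v \<in> {v \<in> {0..1}. h v \<le> h u}"
      show "v \<in> {k (h u)..u}"
      proof (cases "v \<le> \<delta>")
        case True thus ?thesis using v that decle[of "k (h u)" v] ku by auto
      next
        case False thus ?thesis using v that incle[of v u] ku by auto
      qed
    next
      fix v assume v: "v \<in> {k (h u)..u}"
      show "v \<in> {v \<in> {0..1}. h v \<le> h u}"
      proof (cases "v \<le> \<delta>")
        case True thus ?thesis using v that decle[of "k (h u)" v] ku by auto
      next
        case False thus ?thesis using v that incle[of v u] ku by auto
      qed
    qed
    thus ?thesis unfolding distfun_def using ku that by simp
  qed
  have main: "(distfun h \<circ> h) u = vtransform \<delta> \<Psi> u" if "u \<in> {0..1}" for u
  proof (cases "u \<le> \<delta>")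
    case True
    hence "\<delta> * (u / \<delta>) = u" using d0 by simp
    hence "\<Psi> (u / \<delta>) = (1 - g (h u)) / (1 - \<delta>)" by (simp add: \<Psi>_def)
    thus ?thesis using True that Dl[of u] d1 by (simp add: vtransform_def)
  next
    case False
    hence u: "u \<in> {\<delta>..1}" using that by auto
    have ku: "k (h u) \<in> {0..\<delta>}" "h (k (h u)) = h u" using k[OF hr_range[OF u]] by auto
    have x01: "k (h u) / \<delta> \<in> {0..1}" using ku d0 by auto
    have "\<delta> * (k (h u) / \<delta>) = k (h u)" using d0 by simp
    hence "\<Psi> (k (h u) / \<delta>) = (1 - u) / (1 - \<delta>)" using ku gh[OF u] by (simp add: \<Psi>_def)
    hence "the_inv_into {0..1} \<Psi> ((1 - u) / (1 - \<delta>)) = k (h u) / \<delta>"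
      using the_inv_into_f_eq[OF strict_mono_on_imp_inj_on[OF \<Psi>mono] _ x01] by simp
    thus ?thesis using False Dr[OF u] d0 by (simp add: vtransform_def)
  qed
  have part1: "is_vtransform \<delta> \<Psi> (distfun h \<circ> h)"
    unfolding is_vtransform_def using d0 d1 gen main by blast
  have part2: "(\<forall>x\<in>{0..1}. \<Psi> x = x) \<and> (\<forall>u\<in>{0..1}. (distfun h \<circ> h) u = \<bar>2 * u - 1\<bar>)"
    if sym: "\<delta> = 1/2" "\<forall>x\<in>{0..1/2}. h (1/2 - x) = h (1/2 + x)"
  proof -
    have hs: "h u = h (1 - u)" if "u \<in> {0..1/2}" for u
      using sym(2)[rule_format, of "1/2 - u"] that by simp
    have A: "g (h u) = 1 - u" if "u \<in> {0..1/2}" for u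
      using hs[OF that] gh[of "1 - u"] that sym(1) by auto
    show ?thesis
    proof
      show "\<forall>x\<in>{0..1}. \<Psi> x = x"
      proof
        fix x :: real assume x: "x \<in> {0..1}"
        hence "g (h (x/2)) = 1 - x/2" using A[of "x/2"] by auto
        thus "\<Psi> x = x" unfolding \<Psi>_def sym(1) by simp
      qed
      show "\<forall>u\<in>{0..1}. (distfun h \<circ> h) u = \<bar>2 * u - 1\<bar>"
      proof
        fix u :: real assume u: "u \<in> {0..1}"
        show "(distfun h \<circ> h) u = \<bar>2 * u - 1\<bar>"
        proof (cases "u \<le> 1/2")
          case True thus ?thesis using Dl[of u] A[of u] u sym(1) by auto
        next
          case False
          hence "1 - u \<in> {0..1/2}" using u by auto
          hence "k (h u) = 1 - u"
            using hs[of "1 - u"] k_def the_inv_into_f_f[OF injl, of "1 - u"] sym(1) by auto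
          thus ?thesis using Dr[of u] u False sym(1) by auto
        qed
      qed
    qed
  qed
  show ?thesis using part1 part2 unfolding \<Psi>_def g_def by simp
qed

end
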